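(* Consider the partial-block protocol described in the context, on a finite set of agents $A$ with a connected undirected connectivity graph $G=(A,E)$ and block length $L$. If at some epoch $t$ a deadlock occurs, i.e. $D(i)$ holds for every $i\in A$, then all partial blocks have the same size: $|pb_i^{(t)}|=|pb_j^{(t)}|$ for all $i,j\in A$.
   Context: Let $A$ be a finite set of agents (agent IDs) and $G=(A,E)$ a connected undirected graph; $\Gamma_i$ denotes the set of neighbors of $i$. Fix an integer $L\ge 1$ (block length). Each agent $i$ maintains a partial block $pb_i\subseteq A$ (a set of agent IDs). The system runs in epochs $t=0,1,2,\dots$; $pb_i^{(t)}$ is agent $i$'s partial block at the start of epoch $t$. In each epoch: (C1) every agent $i$ with $i\notin pb_i$ adds $i$ to $pb_i$; (C2) every agent $i$ sends its $pb_i$ to every neighbor $j\in\Gamma_i$. When an agent $i$ receives a partial block $P$ (from a neighbor or via a direct message) it applies the rule: (R1) if $|P\setminus\{i\}|>|pb_i\setminus\{i\}|$, agent $i$ sets $pb_i:=P$; (R2) otherwise, if $|P\setminus\{i\}|=|pb_i\setminus\{i\}|$ and $P\neq pb_i$, agent $i$ sends its current $pb_i$ directly to every agent in $P\setminus pb_i$, each of which processes it by the same rule; (R3) otherwise the received block is discarded. All received partial blocks are assumed to pass all validity and similarity checks. For an agent $i$ and epoch $t$, the predicate $D(i)$ means: $pb_i^{(t)}=pb_i^{(t+1)}$ and $|pb_i^{(t)}|<L$. A deadlock at epoch $t$ means that $D(i)$ holds for all $i\in A$. *)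

theory Defs
  imports Main "HOL-Library.Multiset"
begin

definition nbrs :: "'a set \<Rightarrow> ('a \<Rightarrow> 'a \<Rightarrow> bool) \<Rightarrow> 'a \<Rightarrow> 'a set" where
  "nbrs A E i = {j \<in> A. E i j}"

definition connected_graph :: "'a set \<Rightarrow> ('a \<Rightarrow> 'a \<Rightarrow> bool) \<Rightarrow> bool" where
  "connected_graph A E \<longleftrightarrow>
     finite A \<and> A \<noteq> {} \<and>
     (\<forall>i j. E i j \<longrightarrow> i \<in> A \<and> j \<in> A) \<and>
     (\<forall>i j. E i j \<longrightarrow> E j i) \<and>
     (\<forall>i. \<not> E i i) \<and>
     (\<forall>i\<in>A. \<forall>j\<in>A. E\<^sup>*\<^sup>* i j)"

definition add_self :: "'a set \<Rightarrow> ('a \<Rightarrow> 'a set) \<Rightarrow> ('a \<Rightarrow> 'a set)" where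
  "add_self A pb = (\<lambda>i. if i \<in> A then insert i (pb i) else pb i)"

text \<open>Step (C2): every agent sends its partial block to every neighbour.
  A message is a pair (recipient, block).\<close>
definition initial_msgs :: "'a set \<Rightarrow> ('a \<Rightarrow> 'a \<Rightarrow> bool) \<Rightarrow> ('a \<Rightarrow> 'a set)
     \<Rightarrow> ('a \<times> 'a set) multiset" where
  "initial_msgs A E pb = (\<Sum>i\<in>A. \<Sum>j\<in>nbrs A E i. {#(j, pb i)#})"

definition receive :: "'a \<Rightarrow> 'a set \<Rightarrow> ('a \<Rightarrow> 'a set)
     \<Rightarrow> ('a \<Rightarrow> 'a set) \<times> ('a \<times> 'a set) multiset" where
  "receive i P pb =
     (if card (P - {i}) > card (pb i - {i}) then (pb(i := P), {#})
      else if card (P - {i}) = card (pb i - {i}) \<and> P \<noteq> pb i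
        then (pb, mset_set ((\<lambda>k. (k, pb i)) ` (P - pb i)))
      else (pb, {#}))"

inductive deliver :: "('a \<Rightarrow> 'a set) \<times> ('a \<times> 'a set) multiset
     \<Rightarrow> ('a \<Rightarrow> 'a set) \<times> ('a \<times> 'a set) multiset \<Rightarrow> bool" where
  "(i, P) \<in># M \<Longrightarrow> receive i P pb = (pb', N) \<Longrightarrow>
     deliver (pb, M) (pb', (M - {#(i, P)#}) + N)"

definition epoch :: "'a set \<Rightarrow> ('a \<Rightarrow> 'a \<Rightarrow> bool) \<Rightarrow> ('a \<Rightarrow> 'a set)
     \<Rightarrow> ('a \<Rightarrow> 'a set) \<Rightarrow> bool" where
  "epoch A E pb pb' \<longleftrightarrow>
     deliver\<^sup>*\<^sup>* (add_self A pb, initial_msgs A E (add_self A pb)) (pb', {#})"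

definition D :: "nat \<Rightarrow> (nat \<Rightarrow> 'a \<Rightarrow> 'a set) \<Rightarrow> nat \<Rightarrow> 'a \<Rightarrow> bool" where
  "D L pb t i \<longleftrightarrow> pb t i = pb (Suc t) i \<and> card (pb t i) < L"

definition deadlock :: "'a set \<Rightarrow> nat \<Rightarrow> (nat \<Rightarrow> 'a \<Rightarrow> 'a set) \<Rightarrow> nat \<Rightarrow> bool" where
  "deadlock A L pb t \<longleftrightarrow> (\<forall>i\<in>A. D L pb t i)"

end

theory Submission
  imports Defs
begin

lemma receive_cases:
  assumes "receive i P pb = (pb', N)"
  shows "(pb' = pb(i := P) \<and> card (P - {i}) > card (pb i - {i}) \<and> N = {#}) \<or>
         (pb' = pb \<and> card (P - {i}) \<le> card (pb i - {i}) \<and>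
          set_mset N \<subseteq> (\<lambda>k. (k, pb i)) ` (P - pb i))"
proof (cases "card (P - {i}) > card (pb i - {i})")
  case True then show ?thesis using assms unfolding receive_def by auto
next
  case False
  have "set_mset (mset_set ((\<lambda>k. (k, pb i)) ` (P - pb i))) \<subseteq> (\<lambda>k. (k, pb i)) ` (P - pb i)"
    by (cases "finite ((\<lambda>k. (k, pb i)) ` (P - pb i))") auto
  then show ?thesis using False assms unfolding receive_def by (auto split: if_splits)
qed

lemma in_initial_msgs:
  assumes "finite A" "x \<in># initial_msgs A E pb"
  shows "\<exists>i\<in>A. fst x \<in> A \<and> E i (fst x) \<and> snd x = pb i"
proof -
  have fn: "\<And>i. finite (nbrs A E i)" using assms(1) unfolding nbrs_def by auto
  show ?thesis using assms(2) unfolding initial_msgs_def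
    by (simp only: set_mset_sum[OF assms(1)] set_mset_sum[OF fn]) (auto simp: nbrs_def)
qed

lemma initial_msgs_in:
  assumes "finite A" "i \<in> A" "j \<in> A" "E i j"
  shows "(j, pb i) \<in># initial_msgs A E pb"
proof -
  have fn: "\<And>i. finite (nbrs A E i)" using assms(1) unfolding nbrs_def by auto
  show ?thesis using assms unfolding initial_msgs_def
    by (simp only: set_mset_sum[OF assms(1)] set_mset_sum[OF fn]) (auto simp: nbrs_def)
qed

definition J :: "'a set \<Rightarrow> ('a \<Rightarrow> 'a set) \<times> ('a \<times> 'a set) multiset \<Rightarrow> bool" where
  "J A st \<longleftrightarrow> (\<forall>i\<in>A. fst st i \<subseteq> A) \<and> (\<forall>x\<in>#snd st. fst x \<in> A \<and> snd x \<subseteq> A)"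

lemma J_step: "deliver st st' \<Longrightarrow> J A st \<Longrightarrow> J A st'"
proof (induction rule: deliver.induct)
  case (1 i P M pb pb' N)
  have iA0: "\<forall>k\<in>A. pb k \<subseteq> A" "\<forall>x\<in>#M. fst x \<in> A \<and> snd x \<subseteq> A"
    using 1(3) unfolding J_def by auto
  have iA: "i \<in> A" "P \<subseteq> A" "\<forall>k\<in>A. pb k \<subseteq> A" "\<forall>x\<in>#M. fst x \<in> A \<and> snd x \<subseteq> A"
    using iA0 bspec[OF iA0(2) 1(1)] by simp_all
  have h1: "\<forall>k\<in>A. pb' k \<subseteq> A"
  proof
    fix k assume k: "k \<in> A"
    from receive_cases[OF 1(2)] have "pb' k = pb k \<or> pb' k = P"
      by (metis fun_upd_apply)
    then show "pb' k \<subseteq> A"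
    proof
      assume "pb' k = pb k" then show ?thesis using iA(3) k by simp
    next
      assume "pb' k = P" then show ?thesis using iA(2) by simp
    qed
  qed
  have h2: "\<forall>x\<in># M - {#(i, P)#} + N. fst x \<in> A \<and> snd x \<subseteq> A"
  proof
    fix x assume "x \<in># M - {#(i, P)#} + N"
    then have "x \<in># M \<or> x \<in># N" by (auto dest: in_diffD)
    then show "fst x \<in> A \<and> snd x \<subseteq> A"
    proof
      assume "x \<in># M" then show ?thesis using iA(4) by blast
    next
      assume xN: "x \<in># N"
      then have "set_mset N \<subseteq> (\<lambda>k. (k, pb i)) ` (P - pb i)"
        using receive_cases[OF 1(2)] by auto
      with xN obtain k where "k \<in> P" "x = (k, pb i)" by blast
      then show ?thesis using iA by auto
    qed
  qed
  show ?case unfolding J_def using h1 h2 by simp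
qed

lemma J_steps: "deliver\<^sup>*\<^sup>* st st' \<Longrightarrow> J A st \<Longrightarrow> J A st'"
  by (induction rule: rtranclp_induct) (auto intro: J_step)

lemma epoch_subset:
  assumes "connected_graph A E" "\<forall>i\<in>A. pb i \<subseteq> A" "epoch A E pb pb'"
  shows "\<forall>i\<in>A. pb' i \<subseteq> A"
proof -
  have fA: "finite A" using assms(1) unfolding connected_graph_def by auto
  have "J A (add_self A pb, initial_msgs A E (add_self A pb))"
  proof -
    have h1: "\<forall>i\<in>A. add_self A pb i \<subseteq> A" using assms(2) by (auto simp: add_self_def)
    have h2: "\<forall>x\<in># initial_msgs A E (add_self A pb). fst x \<in> A \<and> snd x \<subseteq> A"
    proof
    fix x assume "x \<in># initial_msgs A E (add_self A pb)"
    then obtain i where "i \<in> A" "fst x \<in> A" "snd x = add_self A pb i"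
      using in_initial_msgs[OF fA] by fastforce
    then show "fst x \<in> A \<and> snd x \<subseteq> A" using assms(2) by (auto simp: add_self_def)
  qed
    show ?thesis unfolding J_def using h1 h2 by simp
  qed
  then have "J A (pb', {#})" using J_steps assms(3) unfolding epoch_def by blast
  then show ?thesis unfolding J_def by auto
qed

lemma in_diff_single_neq: "x \<noteq> y \<Longrightarrow> x \<in># M \<Longrightarrow> x \<in># M - {#y#}"
  by (auto simp: in_diff_count)

definition I :: "('a \<Rightarrow> 'a set) \<Rightarrow> ('a \<times> 'a set) multiset \<Rightarrow>
   ('a \<Rightarrow> 'a set) \<times> ('a \<times> 'a set) multiset \<Rightarrow> bool" where
  "I p0 M0 st \<longleftrightarrow>
    (\<forall>k. card (p0 k - {k}) \<le> card (fst st k - {k}) \<and>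
         (card (fst st k - {k}) = card (p0 k - {k}) \<longrightarrow> fst st k = p0 k)) \<and>
    (\<forall>j S. (j, S) \<in># M0 \<longrightarrow> (j, S) \<in># snd st \<or> card (S - {j}) \<le> card (p0 j - {j})
        \<or> card (p0 j - {j}) < card (fst st j - {j}))"

lemma I_step: "deliver st st' \<Longrightarrow> I p0 M0 st \<Longrightarrow> I p0 M0 st'"
proof (induction rule: deliver.induct)
  case (1 i P M pb pb' N)
  have mono: "\<forall>k. card (pb k - {k}) \<le> card (pb' k - {k})"
    and ineq: "card (P - {i}) \<le> card (pb' i - {i})"
    and r1: "pb' \<noteq> pb \<Longrightarrow> card (pb i - {i}) < card (pb' i - {i}) \<and> (\<forall>k. k \<noteq> i \<longrightarrow> pb' k = pb k)"
  proof -
    from receive_cases[OF 1(2)] have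
      "(pb' = pb(i := P) \<and> card (P - {i}) > card (pb i - {i})) \<or>
       (pb' = pb \<and> card (P - {i}) \<le> card (pb i - {i}))" by blast
    then have "\<forall>k. card (pb k - {k}) \<le> card (pb' k - {k})"
      "card (P - {i}) \<le> card (pb' i - {i})"
      "pb' \<noteq> pb \<longrightarrow> card (pb i - {i}) < card (pb' i - {i}) \<and> (\<forall>k. k \<noteq> i \<longrightarrow> pb' k = pb k)"
      by (elim disjE conjE; simp)+
    then show "\<forall>k. card (pb k - {k}) \<le> card (pb' k - {k})"
      "card (P - {i}) \<le> card (pb' i - {i})"
      "pb' \<noteq> pb \<Longrightarrow> card (pb i - {i}) < card (pb' i - {i}) \<and> (\<forall>k. k \<noteq> i \<longrightarrow> pb' k = pb k)"
      by blast+
  qed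
  have I1: "\<forall>k. card (p0 k - {k}) \<le> card (pb k - {k}) \<and>
         (card (pb k - {k}) = card (p0 k - {k}) \<longrightarrow> pb k = p0 k)"
   and I2: "\<forall>j S. (j, S) \<in># M0 \<longrightarrow> (j, S) \<in># M \<or> card (S - {j}) \<le> card (p0 j - {j})
        \<or> card (p0 j - {j}) < card (pb j - {j})"
    using 1(3) unfolding I_def by auto
  have A1: "\<forall>k. card (p0 k - {k}) \<le> card (pb' k - {k}) \<and>
         (card (pb' k - {k}) = card (p0 k - {k}) \<longrightarrow> pb' k = p0 k)"
  proof
    fix k
    show "card (p0 k - {k}) \<le> card (pb' k - {k}) \<and>
         (card (pb' k - {k}) = card (p0 k - {k}) \<longrightarrow> pb' k = p0 k)"
    proof (cases "pb' = pb")
      case True then show ?thesis using I1 by auto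
    next
      case False
      show ?thesis
      proof (cases "k = i")
        case True
        have a: "card (p0 i - {i}) \<le> card (pb i - {i})" using I1 by blast
        have "card (p0 i - {i}) < card (pb' i - {i})" using a r1[OF False] by linarith
        then show ?thesis using True by simp
      next
        case False2: False
        then have "pb' k = pb k" using r1[OF False] by blast
        then show ?thesis using I1 by simp
      qed
    qed
  qed
  have A2: "\<forall>j S. (j, S) \<in># M0 \<longrightarrow> (j, S) \<in># M - {#(i, P)#} + N \<or> card (S - {j}) \<le> card (p0 j - {j})
        \<or> card (p0 j - {j}) < card (pb' j - {j})"
  proof (intro allI impI)
    fix j S assume js: "(j, S) \<in># M0"
    show "(j, S) \<in># M - {#(i, P)#} + N \<or> card (S - {j}) \<le> card (p0 j - {j})
        \<or> card (p0 j - {j}) < card (pb' j - {j})"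
    proof (cases "(j, S) = (i, P)")
      case True
      then have "j = i" "S = P" by auto
      have "card (P - {i}) \<le> card (p0 i - {i}) \<or> card (p0 i - {i}) < card (pb' i - {i})"
        using ineq by linarith
      then show ?thesis using \<open>j = i\<close> \<open>S = P\<close> by blast
    next
      case False
      have "(j, S) \<in># M \<longrightarrow> (j, S) \<in># M - {#(i, P)#}"
        using in_diff_single_neq[OF False] by blast
      moreover have "(j, S) \<in># M \<or> card (S - {j}) \<le> card (p0 j - {j})
        \<or> card (p0 j - {j}) < card (pb j - {j})" using I2 js by blast
      moreover have "card (pb j - {j}) \<le> card (pb' j - {j})" using mono by blast
      ultimately show ?thesis by auto
    qed
  qed
  show ?case unfolding I_def using A1 A2 by simp
qed

lemma I_steps: "deliver\<^sup>*\<^sup>* st st' \<Longrightarrow> I p0 M0 st \<Longrightarrow> I p0 M0 st'"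
  by (induction rule: rtranclp_induct) (auto intro: I_step)

lemma deadlock_epoch:
  assumes "finite A"
    and ep: "epoch A E pb pb'"
    and same: "\<forall>i\<in>A. pb' i = pb i"
  shows "\<forall>i\<in>A. i \<in> pb i" and
    "\<forall>i\<in>A. \<forall>j\<in>A. E i j \<longrightarrow> card (pb i - {j}) \<le> card (pb j - {j})"
proof -
  define p0 where "p0 = add_self A pb"
  define M0 where "M0 = initial_msgs A E p0"
  have "I p0 M0 (p0, M0)" unfolding I_def by auto
  then have I: "I p0 M0 (pb', {#})" using I_steps ep unfolding epoch_def p0_def M0_def by blast
  have eq: "\<And>i. i \<in> A \<Longrightarrow> card (pb' i - {i}) = card (p0 i - {i})"
    using same unfolding p0_def add_self_def by simp
  have p0eq: "\<And>i. i \<in> A \<Longrightarrow> pb' i = p0 i" using I eq unfolding I_def by auto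
  show ins: "\<forall>i\<in>A. i \<in> pb i"
  proof
    fix i assume i: "i \<in> A"
    have "pb i = insert i (pb i)" using p0eq[OF i] same i unfolding p0_def add_self_def by simp
    then show "i \<in> pb i" by blast
  qed
  show "\<forall>i\<in>A. \<forall>j\<in>A. E i j \<longrightarrow> card (pb i - {j}) \<le> card (pb j - {j})"
  proof (intro ballI impI)
    fix i j assume ij: "i \<in> A" "j \<in> A" "E i j"
    have "(j, p0 i) \<in># M0" unfolding M0_def using initial_msgs_in[of A i j E p0, OF assms(1) ij] .
    moreover have "\<forall>j S. (j, S) \<in># M0 \<longrightarrow> (j, S) \<in># {#} \<or> card (S - {j}) \<le> card (p0 j - {j})
        \<or> card (p0 j - {j}) < card (pb' j - {j})" using I unfolding I_def by simp
    ultimately have "card (p0 i - {j}) \<le> card (p0 j - {j}) \<or> card (p0 j - {j}) < card (pb' j - {j})"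
      by simp
    then have "card (p0 i - {j}) \<le> card (p0 j - {j})"
      using eq[OF ij(2)] by linarith
    moreover have "p0 i = pb i" "p0 j = pb j" using ins ij unfolding p0_def add_self_def by auto
    ultimately show "card (pb i - {j}) \<le> card (pb j - {j})" by simp
  qed
qed

theorem lemma3:
  fixes A :: "'a set" and E :: "'a \<Rightarrow> 'a \<Rightarrow> bool"
    and L :: nat and pb :: "nat \<Rightarrow> 'a \<Rightarrow> 'a set" and t :: nat
  assumes "connected_graph A E"
    and "L \<ge> 1"
    and "\<forall>i\<in>A. pb 0 i \<subseteq> A"
    and "\<forall>s. epoch A E (pb s) (pb (Suc s))"
    and "deadlock A L pb t"
  shows "\<forall>i\<in>A. \<forall>j\<in>A. card (pb t i) = card (pb t j)"
proof -
  have fA: "finite A" using assms(1) unfolding connected_graph_def by auto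
  have sub: "\<forall>i\<in>A. pb s i \<subseteq> A" for s
    by (induction s) (use assms(3,4) epoch_subset[OF assms(1)] in auto)
  have fin: "\<And>i. i \<in> A \<Longrightarrow> finite (pb t i)" using sub fA finite_subset by blast
  have same: "\<forall>i\<in>A. pb (Suc t) i = pb t i" using assms(5) unfolding deadlock_def D_def by auto
  note dl = deadlock_epoch[OF fA assms(4)[rule_format, of t] same]
  have edge: "card (pb t i) \<le> card (pb t j)" if ij: "i \<in> A" "j \<in> A" "E i j" for i j
  proof -
    have E2: "E j i" using ij assms(1) unfolding connected_graph_def by auto
    have c1: "card (pb t i - {j}) \<le> card (pb t j - {j})" using dl(2) ij by auto
    have c2: "card (pb t j - {i}) \<le> card (pb t i - {i})" using dl(2) ij E2 by auto
    have ii: "i \<in> pb t i" "j \<in> pb t j" using dl(1) ij by auto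
    have neq: "i \<noteq> j" using ij assms(1) unfolding connected_graph_def by auto
    have pi: "card (pb t i) \<ge> 1" "card (pb t j) \<ge> 1" using ii fin ij
      by (metis One_nat_def Suc_leI card_gt_0_iff empty_iff)+
    show ?thesis
    proof (cases "j \<in> pb t i")
      case True
      then show ?thesis using c1 ii fin[OF ij(1)] fin[OF ij(2)] pi by (simp add: card_Diff_singleton)
    next
      case False
      then have "card (pb t i) < card (pb t j)"
        using c1 ii fin[OF ij(2)] pi by (simp add: card_Diff_singleton)
      moreover have "card (pb t j) - 1 \<le> card (pb t j - {i})"
        using diff_card_le_card_Diff[of "{i}" "pb t j"] by simp
      ultimately show ?thesis using c2 ii fin[OF ij(1)] pi by (simp add: card_Diff_singleton)
    qed
  qed
  have "card (pb t i) = card (pb t j)" if "i \<in> A" "j \<in> A" for i j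
  proof -
    have "E\<^sup>*\<^sup>* i j" using that assms(1) unfolding connected_graph_def by auto
    then show ?thesis using that(2)
    proof (induction rule: converse_rtranclp_induct)
      case base then show ?case by simp
    next
      case (step y z)
      have yz: "y \<in> A" "z \<in> A" "E z y" using step.hyps(1) assms(1) unfolding connected_graph_def by auto
      have "card (pb t y) = card (pb t z)" using edge yz step.hyps(1) by (meson le_antisym)
      then show ?case using step by simp
    qed
  qed
  then show ?thesis by blast
qed

end
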